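(* Let $(p_m)$ and $(q_n)$ belong to $SVA_{reg(\alpha)}$ (for some $\alpha\ge0$), and let $(u_{mn})$ be a double sequence of real numbers that is $(\overline{N},p,q)$ summable to a number $\ell$. If $(u_{mn})$ is slowly decreasing relative to $(P_m)$, slowly decreasing relative to $(Q_n)$, and slowly decreasing relative to $(P_m)$ or relative to $(Q_n)$ in the strong sense, then $(u_{mn})$ is $P$-convergent to $\ell$.
   Context: Weights: $(p_m)_{m\ge0},(q_n)_{n\ge0}$ are sequences of positive reals with $P_m=\sum_{i=0}^m p_i\to\infty$ and $Q_n=\sum_{j=0}^n q_j\to\infty$. $SVA_{reg(\alpha)}$ denotes the set of positive sequences $(p_m)$ whose partial sums have the form $P_m=(m+1)^{\alpha}L(m)$ ($m\ge0$) with a constant $\alpha\ge0$ and a slowly varying function $L$ on $(0,\infty)$, i.e. $L$ positive, measurable, and $L(\lambda t)/L(t)\to1$ as $t\to\infty$ for every $\lambda>0$. The weighted means are $\sigma_{mn}=\frac{1}{P_mQ_n}\sum_{i=0}^m\sum_{j=0}^n p_iq_ju_{ij}$; $(u_{mn})$ is $(\overline{N},p,q)$ summable to $\ell$ if $(\sigma_{mn})$ is $P$-convergent to $\ell$. A double sequence $(a_{mn})$ is $P$-convergent to $\ell$ if for every $\epsilon>0$ there is $n_0$ with $|a_{mn}-\ell|<\epsilon$ whenever $m,n\ge n_0$. For a real double array $(a_{mn})$, $\liminf_{m,n\to\infty}a_{mn}=\lim_{N\to\infty}\inf_{m,n\ge N}a_{mn}$. In the minima below, $i,j$ range over nonnegative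 integers satisfying the constraints. A real double sequence $(u_{mn})$ is: - slowly decreasing relative to $(P_m)$ if $\lim_{\lambda\to1^+}\liminf_{m,n\to\infty}\min_{P_m\le P_i\le\lambda P_m}(u_{in}-u_{mn})\ge0$; - slowly decreasing relative to $(Q_n)$ if $\lim_{\kappa\to1^+}\liminf_{m,n\to\infty}\min_{Q_n\le Q_j\le\kappa Q_n}(u_{mj}-u_{mn})\ge0$; - slowly decreasing relative to $(P_m)$ in the strong sense if $\lim_{\lambda,\kappa\to1^+}\liminf_{m,n\to\infty}\min_{P_m\le P_i\le\lambda P_m,\ Q_n\le Q_j\le\kappa Q_n}(u_{ij}-u_{mj})\ge0$; - slowly decreasing relative to $(Q_n)$ in the strong sense if $\lim_{\lambda,\kappa\to1^+}\liminf_{m,n\to\infty}\min_{P_m\le P_i\le\lambda P_m,\ Q_n\le Q_j\le\kappa Q_n}(u_{ij}-u_{in})\ge0$. *)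

theory Defs
  imports "HOL-Analysis.Analysis"
begin

definition psum :: "(nat \<Rightarrow> real) \<Rightarrow> nat \<Rightarrow> real" where
  "psum p m = (\<Sum>i\<le>m. p i)"

definition slowly_varying :: "(real \<Rightarrow> real) \<Rightarrow> bool" where
  "slowly_varying L \<longleftrightarrow>
     (\<forall>t>0. L t > 0) \<and>
     L \<in> borel_measurable (restrict_space borel {0<..}) \<and>
     (\<forall>lam>0. ((\<lambda>t. L (lam * t) / L t) \<longlongrightarrow> 1) at_top)"

definition SVA_reg :: "real \<Rightarrow> (nat \<Rightarrow> real) \<Rightarrow> bool" where
  "SVA_reg \<alpha> p \<longleftrightarrow> \<alpha> \<ge> 0 \<and> (\<forall>m. p m > 0) \<and>
     (\<exists>L. slowly_varying L \<and> (\<forall>m. psum p m = (real m + 1) powr \<alpha> * L (real m)))"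

definition P_convergent :: "(nat \<Rightarrow> nat \<Rightarrow> real) \<Rightarrow> real \<Rightarrow> bool" where
  "P_convergent a l \<longleftrightarrow>
     (\<forall>\<epsilon>>0. \<exists>n0. \<forall>m n. m \<ge> n0 \<and> n \<ge> n0 \<longrightarrow> \<bar>a m n - l\<bar> < \<epsilon>)"

definition wmean :: "(nat \<Rightarrow> real) \<Rightarrow> (nat \<Rightarrow> real) \<Rightarrow> (nat \<Rightarrow> nat \<Rightarrow> real) \<Rightarrow> nat \<Rightarrow> nat \<Rightarrow> real" where
  "wmean p q u m n = (1 / (psum p m * psum q n)) * (\<Sum>i\<le>m. \<Sum>j\<le>n. p i * q j * u i j)"

definition Nbar_summable :: "(nat \<Rightarrow> real) \<Rightarrow> (nat \<Rightarrow> real) \<Rightarrow> (nat \<Rightarrow> nat \<Rightarrow> real) \<Rightarrow> real \<Rightarrow> bool" where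
  "Nbar_summable p q u l \<longleftrightarrow> P_convergent (wmean p q u) l"

text \<open>liminf_{m,n->oo} a_mn = lim_{N->oo} inf_{m,n>=N} a_mn (extended reals; the inner inf is
  nondecreasing in N, so the limit is the supremum).\<close>
definition dliminf :: "(nat \<Rightarrow> nat \<Rightarrow> ereal) \<Rightarrow> ereal" where
  "dliminf a = (SUP N. INF m\<in>{N..}. INF n\<in>{N..}. a m n)"

definition slow_dec_P :: "(nat \<Rightarrow> real) \<Rightarrow> (nat \<Rightarrow> nat \<Rightarrow> real) \<Rightarrow> bool" where
  "slow_dec_P p u \<longleftrightarrow> (\<exists>L::ereal. L \<ge> 0 \<and>
     ((\<lambda>lam. dliminf (\<lambda>m n. INF i\<in>{i. psum p m \<le> psum p i \<and> psum p i \<le> lam * psum p m}.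
                              ereal (u i n - u m n))) \<longlongrightarrow> L) (at_right 1))"

definition slow_dec_Q :: "(nat \<Rightarrow> real) \<Rightarrow> (nat \<Rightarrow> nat \<Rightarrow> real) \<Rightarrow> bool" where
  "slow_dec_Q q u \<longleftrightarrow> (\<exists>L::ereal. L \<ge> 0 \<and>
     ((\<lambda>kap. dliminf (\<lambda>m n. INF j\<in>{j. psum q n \<le> psum q j \<and> psum q j \<le> kap * psum q n}.
                              ereal (u m j - u m n))) \<longlongrightarrow> L) (at_right 1))"

definition strong_box :: "(nat \<Rightarrow> real) \<Rightarrow> (nat \<Rightarrow> real) \<Rightarrow> real \<Rightarrow> real \<Rightarrow> nat \<Rightarrow> nat \<Rightarrow> (nat \<times> nat) set" where
  "strong_box p q lam kap m n =
     {(i, j). psum p m \<le> psum p i \<and> psum p i \<le> lam * psum p m \<and>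
              psum q n \<le> psum q j \<and> psum q j \<le> kap * psum q n}"

definition slow_dec_P_strong :: "(nat \<Rightarrow> real) \<Rightarrow> (nat \<Rightarrow> real) \<Rightarrow> (nat \<Rightarrow> nat \<Rightarrow> real) \<Rightarrow> bool" where
  "slow_dec_P_strong p q u \<longleftrightarrow> (\<exists>L::ereal. L \<ge> 0 \<and>
     ((\<lambda>(lam, kap). dliminf (\<lambda>m n. INF (i, j)\<in>strong_box p q lam kap m n. ereal (u i j - u m j)))
        \<longlongrightarrow> L) (at_right 1 \<times>\<^sub>F at_right 1))"

definition slow_dec_Q_strong :: "(nat \<Rightarrow> real) \<Rightarrow> (nat \<Rightarrow> real) \<Rightarrow> (nat \<Rightarrow> nat \<Rightarrow> real) \<Rightarrow> bool" where
  "slow_dec_Q_strong p q u \<longleftrightarrow> (\<exists>L::ereal. L \<ge> 0 \<and>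
     ((\<lambda>(lam, kap). dliminf (\<lambda>m n. INF (i, j)\<in>strong_box p q lam kap m n. ereal (u i j - u i n)))
        \<longlongrightarrow> L) (at_right 1 \<times>\<^sub>F at_right 1))"

end

theory Submission
  imports Defs
begin

lemma dliminf_gtD:
  assumes "dliminf a > c"
  shows "\<exists>N. \<forall>m\<ge>N. \<forall>n\<ge>N. a m n > c"
proof -
  from assms obtain N where N: "c < (INF m\<in>{N..}. INF n\<in>{N..}. a m n)"
    unfolding dliminf_def by (auto simp: less_SUP_iff)
  have "a m n > c" if "m \<ge> N" "n \<ge> N" for m n
  proof -
    have "(INF m\<in>{N..}. INF n\<in>{N..}. a m n) \<le> (INF n\<in>{N..}. a m n)"
      using that by (intro INF_lower) auto
    also have "\<dots> \<le> a m n" using that by (intro INF_lower) auto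
    finally show ?thesis using N by simp
  qed
  thus ?thesis by blast
qed

lemma tendsto_right1_pos:
  fixes f :: "real \<Rightarrow> ereal"
  assumes "L \<ge> 0" "(f \<longlongrightarrow> L) (at_right 1)" "e > 0"
  shows "\<exists>lam>1. f lam > ereal (-e)"
proof -
  have "ereal (-e) < 0" using assms(3) by (simp add: zero_ereal_def)
  hence "ereal (-e) < L" using assms(1) by (rule less_le_trans)
  hence "eventually (\<lambda>x. f x > ereal (-e)) (at_right 1)" by (rule order_tendstoD(1)[OF assms(2)])
  moreover have "eventually (\<lambda>x. x \<in> {1<..<2::real}) (at_right 1)" by (rule eventually_at_right_real) simp
  ultimately have "eventually (\<lambda>x. f x > ereal (-e) \<and> x \<in> {1<..<2::real}) (at_right 1)" by (rule eventually_conj)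
  from eventually_happens[OF this] show ?thesis by auto
qed

lemma tendsto_right11_pos:
  fixes f :: "real \<times> real \<Rightarrow> ereal"
  assumes "L \<ge> 0" "(f \<longlongrightarrow> L) (at_right 1 \<times>\<^sub>F at_right 1)" "e > 0"
  shows "\<exists>lam>1. \<exists>kap>1. f (lam, kap) > ereal (-e)"
proof -
  have "ereal (-e) < 0" using assms(3) by (simp add: zero_ereal_def)
  hence "ereal (-e) < L" using assms(1) by (rule less_le_trans)
  hence "eventually (\<lambda>x. f x > ereal (-e)) (at_right 1 \<times>\<^sub>F at_right 1)" by (rule order_tendstoD(1)[OF assms(2)])
  then obtain Pf Pg where PP: "eventually Pf (at_right (1::real))" "eventually Pg (at_right (1::real))"
     "\<forall>x y. Pf x \<longrightarrow> Pg y \<longrightarrow> f (x, y) > ereal (-e)"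
    unfolding eventually_prod_filter by blast
  have "eventually (\<lambda>x. Pf x \<and> x \<in> {1<..<2::real}) (at_right 1)"
    using PP(1) eventually_at_right_real[of 1 2] by (auto intro: eventually_conj)
  from eventually_happens[OF this] obtain x where x: "Pf x" "x > 1" by auto
  have "eventually (\<lambda>x. Pg x \<and> x \<in> {1<..<2::real}) (at_right 1)"
    using PP(2) eventually_at_right_real[of 1 2] by (auto intro: eventually_conj)
  from eventually_happens[OF this] obtain y where y: "Pg y" "y > 1" by auto
  show ?thesis using x y PP(3) by blast
qed

lemma INF_gtD: "c < (INF i\<in>S. f i) \<Longrightarrow> i \<in> S \<Longrightarrow> c < (f i :: ereal)"
  by (meson INF_lower less_le_trans)

lemma SP_extract:
  assumes "slow_dec_P p u" "e > 0"
  shows "\<exists>lam>1. \<exists>N. \<forall>m\<ge>N. \<forall>n\<ge>N. \<forall>i. psum p m \<le> psum p i \<longrightarrow> psum p i \<le> lam * psum p m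
           \<longrightarrow> u i n - u m n > -e"
proof -
  obtain L where L: "L \<ge> 0" "((\<lambda>lam. dliminf (\<lambda>m n. INF i\<in>{i. psum p m \<le> psum p i \<and> psum p i \<le> lam * psum p m}.
                              ereal (u i n - u m n))) \<longlongrightarrow> L) (at_right 1)"
    using assms(1) unfolding slow_dec_P_def by blast
  from tendsto_right1_pos[OF L assms(2)] obtain lam where lam: "lam > 1"
    "ereal (-e) < dliminf (\<lambda>m n. INF i\<in>{i. psum p m \<le> psum p i \<and> psum p i \<le> lam * psum p m}.
                              ereal (u i n - u m n))" by blast
  from dliminf_gtD[OF lam(2)] obtain N where N: "\<forall>m\<ge>N. \<forall>n\<ge>N. ereal (-e) < (INF i\<in>{i. psum p m \<le> psum p i \<and> psum p i \<le> lam * psum p m}.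
                              ereal (u i n - u m n))" by blast
  show ?thesis
    apply (rule exI[of _ lam], simp add: lam(1))
    apply (rule exI[of _ N])
    apply (intro allI impI)
    subgoal for m n i
      using INF_gtD[OF N[rule_format, of m n], of i] by simp
    done
qed

lemma SQ_extract:
  assumes "slow_dec_Q q u" "e > 0"
  shows "\<exists>kap>1. \<exists>N. \<forall>m\<ge>N. \<forall>n\<ge>N. \<forall>j. psum q n \<le> psum q j \<longrightarrow> psum q j \<le> kap * psum q n
           \<longrightarrow> u m j - u m n > -e"
proof -
  obtain L where L: "L \<ge> 0" "((\<lambda>kap. dliminf (\<lambda>m n. INF j\<in>{j. psum q n \<le> psum q j \<and> psum q j \<le> kap * psum q n}.
                              ereal (u m j - u m n))) \<longlongrightarrow> L) (at_right 1)"
    using assms(1) unfolding slow_dec_Q_def by blast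
  from tendsto_right1_pos[OF L assms(2)] obtain kap where kap: "kap > 1"
    "ereal (-e) < dliminf (\<lambda>m n. INF j\<in>{j. psum q n \<le> psum q j \<and> psum q j \<le> kap * psum q n}.
                              ereal (u m j - u m n))" by blast
  from dliminf_gtD[OF kap(2)] obtain N where N: "\<forall>m\<ge>N. \<forall>n\<ge>N. ereal (-e) < (INF j\<in>{j. psum q n \<le> psum q j \<and> psum q j \<le> kap * psum q n}.
                              ereal (u m j - u m n))" by blast
  show ?thesis
    apply (rule exI[of _ kap], simp add: kap(1))
    apply (rule exI[of _ N])
    apply (intro allI impI)
    subgoal for m n j
      using INF_gtD[OF N[rule_format, of m n], of j] by simp
    done
qed

lemma SPs_extract:
  assumes "slow_dec_P_strong p q u" "e > 0"
  shows "\<exists>lam>1. \<exists>kap>1. \<exists>N. \<forall>m\<ge>N. \<forall>n\<ge>N. \<forall>i j. psum p m \<le> psum p i \<longrightarrow> psum p i \<le> lam * psum p m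
           \<longrightarrow> psum q n \<le> psum q j \<longrightarrow> psum q j \<le> kap * psum q n \<longrightarrow> u i j - u m j > -e"
proof -
  obtain L where L: "L \<ge> 0" "((\<lambda>(lam, kap). dliminf (\<lambda>m n. INF (i, j)\<in>strong_box p q lam kap m n. ereal (u i j - u m j)))
        \<longlongrightarrow> L) (at_right 1 \<times>\<^sub>F at_right 1)"
    using assms(1) unfolding slow_dec_P_strong_def by blast
  from tendsto_right11_pos[OF L assms(2)] obtain lam kap where lk: "lam > 1" "kap > 1"
    "ereal (-e) < dliminf (\<lambda>m n. INF (i, j)\<in>strong_box p q lam kap m n. ereal (u i j - u m j))" by auto
  from dliminf_gtD[OF lk(3)] obtain N where N: "\<forall>m\<ge>N. \<forall>n\<ge>N. ereal (-e) < (INF (i, j)\<in>strong_box p q lam kap m n. ereal (u i j - u m j))" by blast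
  show ?thesis
    apply (rule exI[of _ lam], simp add: lk(1))
    apply (rule exI[of _ kap], simp add: lk(2))
    apply (rule exI[of _ N])
    apply (intro allI impI)
    subgoal for m n i j
      using INF_gtD[OF N[rule_format, of m n], of "(i,j)"] unfolding strong_box_def by simp
    done
qed

lemma SQs_extract:
  assumes "slow_dec_Q_strong p q u" "e > 0"
  shows "\<exists>lam>1. \<exists>kap>1. \<exists>N. \<forall>m\<ge>N. \<forall>n\<ge>N. \<forall>i j. psum p m \<le> psum p i \<longrightarrow> psum p i \<le> lam * psum p m
           \<longrightarrow> psum q n \<le> psum q j \<longrightarrow> psum q j \<le> kap * psum q n \<longrightarrow> u i j - u i n > -e"
proof -
  obtain L where L: "L \<ge> 0" "((\<lambda>(lam, kap). dliminf (\<lambda>m n. INF (i, j)\<in>strong_box p q lam kap m n. ereal (u i j - u i n)))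
        \<longlongrightarrow> L) (at_right 1 \<times>\<^sub>F at_right 1)"
    using assms(1) unfolding slow_dec_Q_strong_def by blast
  from tendsto_right11_pos[OF L assms(2)] obtain lam kap where lk: "lam > 1" "kap > 1"
    "ereal (-e) < dliminf (\<lambda>m n. INF (i, j)\<in>strong_box p q lam kap m n. ereal (u i j - u i n))" by auto
  from dliminf_gtD[OF lk(3)] obtain N where N: "\<forall>m\<ge>N. \<forall>n\<ge>N. ereal (-e) < (INF (i, j)\<in>strong_box p q lam kap m n. ereal (u i j - u i n))" by blast
  show ?thesis
    apply (rule exI[of _ lam], simp add: lk(1))
    apply (rule exI[of _ kap], simp add: lk(2))
    apply (rule exI[of _ N])
    apply (intro allI impI)
    subgoal for m n i j
      using INF_gtD[OF N[rule_format, of m n], of "(i,j)"] unfolding strong_box_def by simp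
    done
qed

lemma bad_set_meas:
  fixes h :: "real \<Rightarrow> real"
  assumes hm: "h \<in> borel_measurable borel"
  shows "{v \<in> {0..2}. c \<le> \<bar>h (x + v) - h x\<bar>} \<in> sets lborel"
proof -
  have "(\<lambda>v. \<bar>h (x + v) - h x\<bar>) \<in> borel_measurable borel" using hm by measurable
  hence "{v \<in> space borel. c \<le> \<bar>h (x + v) - h x\<bar>} \<in> sets borel" by measurable
  hence "{v. c \<le> \<bar>h (x + v) - h x\<bar>} \<in> sets borel" by simp
  hence "{v. c \<le> \<bar>h (x + v) - h x\<bar>} \<inter> {0..2} \<in> sets borel" by auto
  moreover have "{v \<in> {0..2}. c \<le> \<bar>h (x + v) - h x\<bar>} = {v. c \<le> \<bar>h (x + v) - h x\<bar>} \<inter> {0..2}" by auto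
  ultimately show ?thesis by simp
qed

lemma bad_set_small:
  fixes h :: "real \<Rightarrow> real" and z :: "nat \<Rightarrow> real"
  assumes hm: "h \<in> borel_measurable borel"
    and conv: "\<And>u. u \<in> {0..2} \<Longrightarrow> ((\<lambda>x. h (x + u) - h x) \<longlongrightarrow> 0) at_top"
    and z: "filterlim z at_top sequentially" and c: "c > 0"
  shows "eventually (\<lambda>k. emeasure lborel {v \<in> {0..2}. c \<le> \<bar>h (z k + v) - h (z k)\<bar>} < ennreal (1/2)) sequentially"
proof -
  define B where "B k = {v \<in> {0..2}. c \<le> \<bar>h (z k + v) - h (z k)\<bar>}" for k
  define G where "G k = (\<Union>n\<in>{k..}. B n)" for k
  have Bm: "B k \<in> sets lborel" for k unfolding B_def by (rule bad_set_meas[OF hm])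
  have Gm: "G k \<in> sets lborel" for k unfolding G_def using Bm by (intro sets.countable_UN) auto
  have dec: "decseq G" unfolding G_def decseq_def by (auto, meson atLeast_iff order_trans)
  have Gsub: "G k \<subseteq> {0..2}" for k unfolding G_def B_def by auto
  have fin: "emeasure lborel (G k) \<noteq> \<infinity>" for k
  proof -
    have "emeasure lborel (G k) \<le> emeasure lborel {0..2::real}"
      by (rule emeasure_mono[OF Gsub]) simp
    also have "\<dots> = ennreal 2" by simp
    finally show ?thesis by (metis add.commute add_le_same_cancel1 ennreal_add_left_cancel
    ennreal_le_iff2 le_iff_add not_numeral_le_zero)
  qed
  have empty: "(\<Inter>k. G k) = {}"
  proof (rule ccontr)
    assume "(\<Inter>k. G k) \<noteq> {}"
    then obtain v where v: "\<And>k. v \<in> G k" by blast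
    hence v02: "v \<in> {0..2}" using Gsub by blast
    have "((\<lambda>k. h (z k + v) - h (z k)) \<longlongrightarrow> 0) sequentially"
      using filterlim_compose[OF conv[OF v02] z] by simp
    hence "eventually (\<lambda>k. dist (h (z k + v) - h (z k)) 0 < c) sequentially"
      using c by (auto simp: tendsto_iff)
    then obtain K where K: "\<And>k. k \<ge> K \<Longrightarrow> \<bar>h (z k + v) - h (z k)\<bar> < c"
      by (auto simp: eventually_sequentially)
    have "v \<in> G K" by (rule v)
    then obtain n where "n \<ge> K" "v \<in> B n" unfolding G_def by auto
    thus False using K[of n] unfolding B_def by auto
  qed
  have "(\<lambda>k. emeasure lborel (G k)) \<longlonglongrightarrow> emeasure lborel (\<Inter>k. G k)"
    by (rule Lim_emeasure_decseq) (use Gm dec fin in auto)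
  hence "(\<lambda>k. emeasure lborel (G k)) \<longlonglongrightarrow> 0" using empty by simp
  hence "eventually (\<lambda>k. emeasure lborel (G k) < ennreal (1/2)) sequentially"
    by (rule order_tendstoD(2)) (subst ennreal_less_zero_iff, simp)
  moreover have "emeasure lborel (B k) \<le> emeasure lborel (G k)" for k
    by (rule emeasure_mono[OF _ Gm]) (auto simp: G_def)
  ultimately have "eventually (\<lambda>k. emeasure lborel (B k) < ennreal (1/2)) sequentially"
    by (metis (mono_tags, lifting) eventually_mono le_less_trans)
  thus ?thesis unfolding B_def .
qed

lemma lborel_translate:
  fixes A :: "real set"
  assumes "A \<in> sets borel"
  shows "emeasure lborel ((\<lambda>u. a + u) -` A) = emeasure lborel A"
proof -
  have "emeasure (distr lborel borel ((+) a)) A = emeasure lborel ((+) a -` A \<inter> space lborel)"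
    by (rule emeasure_distr) (use assms in auto)
  thus ?thesis by (simp add: lborel_distr_plus)
qed

lemma uct_seq:
  fixes h :: "real \<Rightarrow> real" and x d :: "nat \<Rightarrow> real"
  assumes hm: "h \<in> borel_measurable borel"
    and conv: "\<And>u. u \<in> {0..2} \<Longrightarrow> ((\<lambda>x. h (x + u) - h x) \<longlongrightarrow> 0) at_top"
    and x: "filterlim x at_top sequentially"
    and d: "\<And>k. d k \<in> {0..1}"
  shows "((\<lambda>k. h (x k + d k) - h (x k)) \<longlongrightarrow> 0) sequentially"
  unfolding tendsto_iff
proof (intro allI impI)
  fix e :: real assume e: "e > 0"
  define c where "c = e / 2"
  have c: "c > 0" using e by (simp add: c_def)
  have y: "filterlim (\<lambda>k. x k + d k) at_top sequentially"
    by (rule filterlim_at_top_mono[OF x]) (use d in auto)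
  have ev: "eventually (\<lambda>k. emeasure lborel {v \<in> {0..2}. c \<le> \<bar>h (x k + v) - h (x k)\<bar>} < ennreal (1/2)
      \<and> emeasure lborel {v \<in> {0..2}. c \<le> \<bar>h ((x k + d k) + v) - h (x k + d k)\<bar>} < ennreal (1/2)) sequentially"
    using bad_set_small[OF hm conv x c] bad_set_small[OF hm conv y c] by (auto intro: eventually_conj)
  show "eventually (\<lambda>k. dist (h (x k + d k) - h (x k)) 0 < e) sequentially"
    using ev
  proof eventually_elim
    case (elim k)
    define Bx where "Bx = {v \<in> {0..2}. c \<le> \<bar>h (x k + v) - h (x k)\<bar>}"
    define By where "By = {v \<in> {0..2}. c \<le> \<bar>h ((x k + d k) + v) - h (x k + d k)\<bar>}"
    have Bxm: "Bx \<in> sets lborel" unfolding Bx_def by (rule bad_set_meas[OF hm])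
    have Bym: "By \<in> sets lborel" unfolding By_def by (rule bad_set_meas[OF hm])
    have Bym': "(\<lambda>u. - d k + u) -` By \<in> sets lborel"
    proof -
      have "(\<lambda>u. - d k + u) \<in> borel_measurable borel" by measurable
      hence "(\<lambda>u. - d k + u) -` By \<inter> space borel \<in> sets borel"
        using Bym by (intro measurable_sets) auto
      thus ?thesis by simp
    qed
    show ?case
    proof (rule ccontr)
      assume A: "\<not> dist (h (x k + d k) - h (x k)) 0 < e"
      have sub: "{1..2} \<subseteq> Bx \<union> (\<lambda>u. - d k + u) -` By"
      proof
        fix u :: real assume u: "u \<in> {1..2}"
        show "u \<in> Bx \<union> (\<lambda>u. - d k + u) -` By"
        proof (rule ccontr)
          assume "u \<notin> Bx \<union> (\<lambda>u. - d k + u) -` By"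
          hence 1: "\<bar>h (x k + u) - h (x k)\<bar> < c" and
                2: "\<bar>h ((x k + d k) + (- d k + u)) - h (x k + d k)\<bar> < c"
            using u d[of k] unfolding Bx_def By_def by auto
          have "(x k + d k) + (- d k + u) = x k + u" by simp
          hence "\<bar>h (x k + u) - h (x k + d k)\<bar> < c" using 2 by simp
          hence "\<bar>h (x k + d k) - h (x k)\<bar> < e" using 1 unfolding c_def by arith
          thus False using A by (simp add: dist_real_def)
        qed
      qed
      have "ennreal 1 = emeasure lborel {1..2::real}" by simp
      also have "\<dots> \<le> emeasure lborel (Bx \<union> (\<lambda>u. - d k + u) -` By)"
        by (rule emeasure_mono[OF sub]) (use Bxm Bym' in auto)
      also have "\<dots> \<le> emeasure lborel Bx + emeasure lborel ((\<lambda>u. - d k + u) -` By)"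
        by (rule emeasure_subadditive) (use Bxm Bym' in auto)
      also have "emeasure lborel ((\<lambda>u. - d k + u) -` By) = emeasure lborel By"
        by (rule lborel_translate) (use Bym in simp)
      also have "emeasure lborel Bx + emeasure lborel By < ennreal (1/2) + ennreal (1/2)"
        using elim unfolding Bx_def By_def by (intro add_strict_mono) auto
      also have "ennreal (1/2) + ennreal (1/2) = ennreal 1"
        by (subst ennreal_plus[symmetric]) auto
      finally show False by simp
    qed
  qed
qed


lemma SVA_ratio:
  assumes "SVA_reg \<alpha> p"
  shows "(\<lambda>k. psum p (Suc (Suc k)) / psum p (Suc k)) \<longlonglongrightarrow> 1"
proof -
  obtain L where sv: "slowly_varying L" and PL: "\<And>m. psum p m = (real m + 1) powr \<alpha> * L (real m)"
    using assms unfolding SVA_reg_def by blast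
  have Lpos: "\<And>t. t > 0 \<Longrightarrow> L t > 0" and Lm: "L \<in> borel_measurable (restrict_space borel {0<..})"
    and Llim: "\<And>lam. lam > 0 \<Longrightarrow> ((\<lambda>t. L (lam * t) / L t) \<longlongrightarrow> 1) at_top"
    using sv unfolding slowly_varying_def by auto
  define h where "h x = ln (L (exp x))" for x
  have expm: "exp \<in> measurable borel (restrict_space borel ({0<..}::real set))"
    by (rule measurable_restrict_space2) auto
  have "(\<lambda>x. L (exp x)) \<in> borel_measurable borel"
    using measurable_compose[OF expm Lm] .
  hence hm: "h \<in> borel_measurable borel" unfolding h_def by measurable
  have conv: "((\<lambda>x. h (x + u) - h x) \<longlongrightarrow> 0) at_top" for u
  proof -
    have "((\<lambda>t. L (exp u * t) / L t) \<longlongrightarrow> 1) at_top" by (rule Llim) simp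
    hence "((\<lambda>x. L (exp u * exp x) / L (exp x)) \<longlongrightarrow> 1) at_top"
      by (rule filterlim_compose[OF _ exp_at_top])
    hence "((\<lambda>x. ln (L (exp u * exp x) / L (exp x))) \<longlongrightarrow> ln 1) at_top"
      by (intro tendsto_ln) auto
    moreover have "ln (L (exp u * exp x) / L (exp x)) = h (x + u) - h x" for x
      unfolding h_def using Lpos[of "exp x"] Lpos[of "exp u * exp x"]
      by (simp add: ln_div exp_add mult.commute)
    ultimately show ?thesis by simp
  qed
  define x where "x k = ln (real k + 1)" for k :: nat
  define d where "d k = ln (real k + 2) - ln (real k + 1)" for k :: nat
  have xlim: "filterlim x at_top sequentially"
    unfolding x_def
    by (rule filterlim_compose[OF ln_at_top]) (rule filterlim_at_top_mono[OF filterlim_real_sequentially], simp)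
  have d01: "d k \<in> {0..1}" for k
  proof -
    have "ln (real k + 2) - ln (real k + 1) = ln ((real k + 2) / (real k + 1))" by (simp add: ln_div)
    also have "\<dots> \<le> (real k + 2) / (real k + 1) - 1" by (rule ln_le_minus_one) (simp add: divide_pos_pos)
    also have "\<dots> \<le> 1" by (simp add: field_simps)
    finally have "d k \<le> 1" unfolding d_def .
    moreover have "d k \<ge> 0" unfolding d_def by simp
    ultimately show ?thesis by simp
  qed
  have "((\<lambda>k. h (x k + d k) - h (x k)) \<longlongrightarrow> 0) sequentially"
    by (rule uct_seq[OF hm _ xlim d01]) (rule conv)
  moreover have "h (x k + d k) - h (x k) = ln (L (real k + 2)) - ln (L (real k + 1))" for k
    unfolding h_def x_def d_def by simp
  ultimately have "((\<lambda>k. ln (L (real k + 2)) - ln (L (real k + 1))) \<longlongrightarrow> 0) sequentially" by simp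
  hence "((\<lambda>k. exp (ln (L (real k + 2)) - ln (L (real k + 1)))) \<longlongrightarrow> exp 0) sequentially"
    by (rule tendsto_exp)
  moreover have "exp (ln (L (real k + 2)) - ln (L (real k + 1))) = L (real k + 2) / L (real k + 1)" for k
    using Lpos[of "real k + 2"] Lpos[of "real k + 1"] by (simp add: exp_diff)
  ultimately have Lr: "(\<lambda>k. L (real k + 2) / L (real k + 1)) \<longlonglongrightarrow> 1" by simp
  have "filterlim (\<lambda>k. real k + 2) at_top sequentially"
    by (rule filterlim_at_top_mono[OF filterlim_real_sequentially], simp)
  hence "(\<lambda>k. 1 + inverse (real k + 2)) \<longlonglongrightarrow> 1 + 0"
    by (intro tendsto_add tendsto_const tendsto_inverse_0_at_top)
  moreover have "1 + inverse (real k + 2) = (real k + 3) / (real k + 2)" for k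
    by (simp add: field_simps)
  ultimately have r: "(\<lambda>k. (real k + 3) / (real k + 2)) \<longlonglongrightarrow> 1" by simp
  have "(\<lambda>k. ((real k + 3) / (real k + 2)) powr \<alpha>) \<longlonglongrightarrow> 1 powr \<alpha>"
    by (rule tendsto_powr[OF r tendsto_const]) simp
  hence "(\<lambda>k. ((real k + 3) / (real k + 2)) powr \<alpha> * (L (real k + 2) / L (real k + 1))) \<longlonglongrightarrow> 1 * 1"
    using Lr by (intro tendsto_mult) auto
  moreover have "psum p (Suc (Suc k)) / psum p (Suc k) = ((real k + 3) / (real k + 2)) powr \<alpha> * (L (real k + 2) / L (real k + 1))" for k
  proof -
    have a: "real (Suc (Suc k)) = real k + 2" "real (Suc k) = real k + 1" by simp_all
    have "psum p (Suc (Suc k)) / psum p (Suc k) = ((real k + 3) powr \<alpha> * L (real k + 2)) / ((real k + 2) powr \<alpha> * L (real k + 1))"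
      by (unfold PL a; simp add: add.assoc)
    also have "\<dots> = ((real k + 3) powr \<alpha> / (real k + 2) powr \<alpha>) * (L (real k + 2) / L (real k + 1))" by simp
    also have "(real k + 3) powr \<alpha> / (real k + 2) powr \<alpha> = ((real k + 3) / (real k + 2)) powr \<alpha>"
      by (rule powr_divide[symmetric])
    finally show ?thesis .
  qed
  ultimately show ?thesis by simp
qed

lemma SVA_ratio_ev:
  assumes "SVA_reg \<alpha> p" "\<delta> > 0"
  shows "\<exists>M. \<forall>m\<ge>M. psum p (Suc m) \<le> (1 + \<delta>) * psum p m"
proof -
  have pos: "psum p m > 0" for m
    using assms(1) unfolding SVA_reg_def psum_def by (intro sum_pos) auto
  from order_tendstoD(2)[OF SVA_ratio[OF assms(1)], of "1 + \<delta>"] assms(2)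
  obtain M where M: "\<And>k. k \<ge> M \<Longrightarrow> psum p (Suc (Suc k)) / psum p (Suc k) < 1 + \<delta>"
    by (auto simp: eventually_sequentially)
  have "psum p (Suc m) \<le> (1 + \<delta>) * psum p m" if mM: "m \<ge> Suc M" for m
  proof -
    obtain k where k: "m = Suc k" "k \<ge> M" using mM by (intro that[of "m - 1"]) auto
    have "psum p (Suc (Suc k)) / psum p (Suc k) < 1 + \<delta>" using M k by simp
    thus ?thesis using pos[of "Suc k"] k by (simp add: divide_less_eq)
  qed
  thus ?thesis by blast
qed

locale regseq =
  fixes P :: "nat \<Rightarrow> real"
  assumes pos: "\<And>m. P m > 0"
    and smono: "\<And>m. P m < P (Suc m)"
    and inf: "filterlim P at_top sequentially"
    and rat: "\<And>\<delta>. \<delta> > 0 \<Longrightarrow> \<exists>M. \<forall>m\<ge>M. P (Suc m) \<le> (1 + \<delta>) * P m"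
begin

lemma mono_le: "i \<le> j \<Longrightarrow> P i \<le> P j"
  by (rule lift_Suc_mono_le[of P]) (use smono less_imp_le in auto)

lemma mono_less: "i < j \<Longrightarrow> P i < P j"
  by (rule lift_Suc_mono_less[of P]) (use smono in auto)


lemma rat_mu:
  assumes "lam > 1"
  shows "\<exists>M. \<forall>m\<ge>M. P (Suc m) \<le> sqrt lam * P m"
  using rat[of "sqrt lam - 1"] assms by auto

lemma exceeds: "\<exists>K. X < P K"
proof -
  have "eventually (\<lambda>K. X < P K) sequentially" using inf by (simp add: filterlim_at_top_dense)
  thus ?thesis by (auto simp: eventually_sequentially)
qed

lemma window_up:
  assumes lam: "lam > 1"
  shows "\<exists>M. \<forall>m\<ge>M. \<exists>a>m. sqrt lam * P m \<le> P a \<and> P a \<le> lam * P m"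
proof -
  define mu where "mu = sqrt lam"
  have mu: "mu > 1" "mu * mu = lam" using lam by (auto simp: mu_def)
  have mule: "mu \<le> lam"
  proof -
    have "mu * 1 \<le> mu * mu" using mu by (intro mult_left_mono) auto
    thus ?thesis using mu by simp
  qed
  obtain M0 where M0: "\<And>m. m \<ge> M0 \<Longrightarrow> P (Suc m) \<le> mu * P m" using rat_mu[OF lam] unfolding mu_def by blast
  have "\<exists>a>m. mu * P m \<le> P a \<and> P a \<le> lam * P m" if m: "m \<ge> M0" for m
  proof -
    define X where "X = lam * P m"
    have PX: "P (Suc m) \<le> X"
    proof -
      have "P (Suc m) \<le> mu * P m" using M0 m by simp
      also have "\<dots> \<le> lam * P m" using mule pos[of m]
        by (intro mult_right_mono) auto
      finally show ?thesis unfolding X_def .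
    qed
    obtain K where K: "X < P K" using exceeds by blast
    define K0 where "K0 = (LEAST K. X < P K)"
    have K0: "X < P K0" unfolding K0_def using K by (rule LeastI)
    have K0gt: "K0 > Suc m"
    proof (rule ccontr)
      assume "\<not> K0 > Suc m"
      hence "P K0 \<le> P (Suc m)" by (intro mono_le) simp
      thus False using K0 PX by simp
    qed
    define a where "a = K0 - 1"
    have aK: "Suc a = K0" "a > m" using K0gt by (auto simp: a_def)
    have Pa: "P a \<le> X"
    proof -
      have "a < (LEAST K. X < P K)" using aK unfolding K0_def by simp
      hence "\<not> X < P a" by (rule not_less_Least)
      thus ?thesis by simp
    qed
    have "P (Suc a) \<le> mu * P a" using M0[of a] aK m by simp
    moreover have "X < P (Suc a)" using K0 aK by simp
    ultimately have "lam * P m < mu * P a" unfolding X_def by linarith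
    hence "mu * (mu * P m) < mu * P a" by (metis mu(2) mult.assoc)
    hence "mu * P m < P a" by (subst (asm) mult_less_cancel_left_pos) (use mu in auto)
    thus ?thesis using Pa aK unfolding X_def by auto
  qed
  thus ?thesis unfolding mu_def by blast
qed

lemma window_down:
  assumes lam: "lam > 1"
  shows "\<exists>M. \<forall>m\<ge>M. \<exists>a. N \<le> a \<and> a < m \<and> sqrt lam * P a \<le> P m \<and> P m \<le> lam * P a"
proof -
  define mu where "mu = sqrt lam"
  have mu: "mu > 1" "mu * mu = lam" using lam by (auto simp: mu_def)
  have mule: "mu \<le> lam"
  proof -
    have "mu * 1 \<le> mu * mu" using mu by (intro mult_left_mono) auto
    thus ?thesis using mu by simp
  qed
  have mulam: "mu * x \<le> lam * x" if "x > 0" for x using mule that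
    by (intro mult_right_mono) auto
  obtain M0 where M0: "\<And>m. m \<ge> M0 \<Longrightarrow> P (Suc m) \<le> mu * P m" using rat_mu[OF lam] unfolding mu_def by blast
  define N' where "N' = max N M0"
  obtain M where M: "lam * P (Suc N') < P M" using exceeds by blast
  have "\<exists>a. N \<le> a \<and> a < m \<and> mu * P a \<le> P m \<and> P m \<le> lam * P a" if m: "m \<ge> M" for m
  proof -
    have Pm: "lam * P (Suc N') < P m" using M mono_le[OF m] by simp
    have "P (Suc N') < lam * P (Suc N')" using lam pos[of "Suc N'"] by simp
    hence PP: "P (Suc N') < P m" using Pm by linarith
    have mN: "m > Suc N'"
    proof (rule ccontr)
      assume "\<not> m > Suc N'"
      hence "P m \<le> P (Suc N')" by (intro mono_le) simp
      thus False using PP by simp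
    qed
    have ex: "P m \<le> lam * P (m - 1)"
    proof -
      have "P m = P (Suc (m - 1))" using mN by simp
      also have "\<dots> \<le> mu * P (m - 1)" using M0[of "m - 1"] mN unfolding N'_def by simp
      also have "\<dots> \<le> lam * P (m - 1)" by (rule mulam[OF pos])
      finally show ?thesis .
    qed
    define a where "a = (LEAST a. P m \<le> lam * P a)"
    have a1: "P m \<le> lam * P a" unfolding a_def using ex by (rule LeastI)
    have a2: "a \<le> m - 1" unfolding a_def using ex by (rule Least_le)
    have a3: "a > Suc N'"
    proof (rule ccontr)
      assume "\<not> a > Suc N'"
      hence "P a \<le> P (Suc N')" by (intro mono_le) simp
      hence "lam * P a \<le> lam * P (Suc N')" using lam by simp
      thus False using a1 Pm by simp
    qed
    have "a - 1 < (LEAST a. P m \<le> lam * P a)" using a3 unfolding a_def[symmetric] by simp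
    hence a4: "\<not> P m \<le> lam * P (a - 1)" by (rule not_less_Least)
    have "P a = P (Suc (a - 1))" using a3 by simp
    also have "\<dots> \<le> mu * P (a - 1)" using M0[of "a - 1"] a3 unfolding N'_def by simp
    finally have "mu * P a \<le> mu * (mu * P (a - 1))" using mu by simp
    also have "\<dots> = lam * P (a - 1)" using mu by simp
    also have "\<dots> < P m" using a4 by simp
    finally have "mu * P a < P m" .
    thus ?thesis using a1 a2 a3 mN unfolding N'_def by (intro exI[of _ a]) auto
  qed
  thus ?thesis unfolding mu_def by blast
qed

end

lemma sum_Ioc_diff:
  fixes f :: "nat \<Rightarrow> real"
  assumes "a \<le> b"
  shows "(\<Sum>i\<in>{a<..b}. f i) = (\<Sum>i\<le>b. f i) - (\<Sum>i\<le>a. f i)"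
proof -
  have "{..b} = {..a} \<union> {a<..b}" using assms by auto
  moreover have "{..a} \<inter> {a<..b} = {}" by auto
  ultimately have "(\<Sum>i\<le>b. f i) = (\<Sum>i\<le>a. f i) + (\<Sum>i\<in>{a<..b}. f i)"
    by (simp add: sum.union_disjoint)
  thus ?thesis by simp
qed

definition Ssum :: "(nat \<Rightarrow> real) \<Rightarrow> (nat \<Rightarrow> real) \<Rightarrow> (nat \<Rightarrow> nat \<Rightarrow> real) \<Rightarrow> nat \<Rightarrow> nat \<Rightarrow> real" where
  "Ssum p q u x y = (\<Sum>i\<le>x. \<Sum>j\<le>y. p i * q j * u i j)"

lemma block_sum:
  assumes "a \<le> b" "c \<le> d"
  shows "(\<Sum>i\<in>{a<..b}. \<Sum>j\<in>{c<..d}. p i * q j * u i j)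
     = Ssum p q u b d - Ssum p q u a d - Ssum p q u b c + Ssum p q u a c"
proof -
  have "(\<Sum>i\<in>{a<..b}. \<Sum>j\<in>{c<..d}. p i * q j * u i j)
      = (\<Sum>i\<in>{a<..b}. (\<Sum>j\<le>d. p i * q j * u i j) - (\<Sum>j\<le>c. p i * q j * u i j))"
    using assms(2) by (intro sum.cong refl sum_Ioc_diff)
  also have "\<dots> = (\<Sum>i\<in>{a<..b}. (\<Sum>j\<le>d. p i * q j * u i j)) - (\<Sum>i\<in>{a<..b}. (\<Sum>j\<le>c. p i * q j * u i j))"
    by (rule sum_subtractf)
  also have "\<dots> = Ssum p q u b d - Ssum p q u a d - Ssum p q u b c + Ssum p q u a c"
    unfolding Ssum_def using assms(1) by (simp add: sum_Ioc_diff)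
  finally show ?thesis .
qed

lemma Ssum_wmean:
  assumes "psum p x > 0" "psum q y > 0"
  shows "Ssum p q u x y = psum p x * psum q y * wmean p q u x y"
  using assms unfolding Ssum_def wmean_def by simp

lemma block_weight:
  assumes "a \<le> b" "c \<le> d"
  shows "(\<Sum>i\<in>{a<..b}. \<Sum>j\<in>{c<..d}. p i * q j) = (psum p b - psum p a) * (psum q d - psum q c)"
proof -
  have "(\<Sum>i\<in>{a<..b}. \<Sum>j\<in>{c<..d}. p i * q j) = (\<Sum>i\<in>{a<..b}. p i) * (\<Sum>j\<in>{c<..d}. q j)"
    by (simp add: sum_product)
  also have "\<dots> = (psum p b - psum p a) * (psum q d - psum q c)"
    unfolding psum_def using assms by (simp add: sum_Ioc_diff)
  finally show ?thesis .
qed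

lemma absmul: "(y::real) \<ge> 0 \<Longrightarrow> \<bar>x\<bar> \<le> \<delta> \<Longrightarrow> \<bar>y * x\<bar> \<le> y * \<delta>"
  by (simp add: abs_mult mult_left_mono)

lemma block_close:
  fixes p q :: "nat \<Rightarrow> real" and u :: "nat \<Rightarrow> nat \<Rightarrow> real"
  assumes Ppos: "\<And>m. psum p m > 0" and Qpos: "\<And>n. psum q n > 0"
    and ab: "a \<le> b" and cd: "c \<le> d"
    and sig: "\<And>x y. x \<in> {a, b} \<Longrightarrow> y \<in> {c, d} \<Longrightarrow> \<bar>wmean p q u x y - l\<bar> \<le> \<delta>"
  shows "\<bar>(\<Sum>i\<in>{a<..b}. \<Sum>j\<in>{c<..d}. p i * q j * u i j)
           - l * ((psum p b - psum p a) * (psum q d - psum q c))\<bar>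
         \<le> \<delta> * ((psum p b + psum p a) * (psum q d + psum q c))"
proof -
  define Pa Pb Qc Qd where "Pa = psum p a" "Pb = psum p b" "Qc = psum q c" "Qd = psum q d"
  define sac sad sbc sbd where "sac = wmean p q u a c" "sad = wmean p q u a d" "sbc = wmean p q u b c" "sbd = wmean p q u b d"
  have pos: "Pa > 0" "Pb > 0" "Qc > 0" "Qd > 0" using Ppos Qpos by (auto simp: Pa_Pb_Qc_Qd_def)
  have "(\<Sum>i\<in>{a<..b}. \<Sum>j\<in>{c<..d}. p i * q j * u i j) - l * ((Pb - Pa) * (Qd - Qc))
     = Pb * Qd * (sbd - l) - Pa * Qd * (sad - l) - Pb * Qc * (sbc - l) + Pa * Qc * (sac - l)"
    unfolding block_sum[OF ab cd]
    by (simp add: Ssum_wmean Ppos Qpos Pa_Pb_Qc_Qd_def sac_sad_sbc_sbd_def algebra_simps)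
  moreover have "\<bar>Pb * Qd * (sbd - l)\<bar> \<le> Pb * Qd * \<delta>" using pos sig[of b d]
    by (intro absmul) (auto simp: sac_sad_sbc_sbd_def)
  moreover have "\<bar>Pa * Qd * (sad - l)\<bar> \<le> Pa * Qd * \<delta>" using pos sig[of a d]
    by (intro absmul) (auto simp: sac_sad_sbc_sbd_def)
  moreover have "\<bar>Pb * Qc * (sbc - l)\<bar> \<le> Pb * Qc * \<delta>" using pos sig[of b c]
    by (intro absmul) (auto simp: sac_sad_sbc_sbd_def)
  moreover have "\<bar>Pa * Qc * (sac - l)\<bar> \<le> Pa * Qc * \<delta>" using pos sig[of a c]
    by (intro absmul) (auto simp: sac_sad_sbc_sbd_def)
  ultimately have "\<bar>(\<Sum>i\<in>{a<..b}. \<Sum>j\<in>{c<..d}. p i * q j * u i j) - l * ((Pb - Pa) * (Qd - Qc))\<bar>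
      \<le> Pb * Qd * \<delta> + Pa * Qd * \<delta> + Pb * Qc * \<delta> + Pa * Qc * \<delta>" by linarith
  also have "\<dots> = \<delta> * ((Pb + Pa) * (Qd + Qc))" by (simp add: algebra_simps)
  finally show ?thesis unfolding Pa_Pb_Qc_Qd_def .
qed

lemma block_main:
  fixes p q :: "nat \<Rightarrow> real" and u :: "nat \<Rightarrow> nat \<Rightarrow> real"
  assumes ppos: "\<And>m. p m > 0" and qpos: "\<And>n. q n > 0"
    and Ppos: "\<And>m. psum p m > 0" and Qpos: "\<And>n. psum q n > 0"
    and ab: "a < b" and cd: "c < d"
    and sig: "\<And>x y. x \<in> {a, b} \<Longrightarrow> y \<in> {c, d} \<Longrightarrow> \<bar>wmean p q u x y - l\<bar> \<le> \<delta>"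
    and RP: "psum p b + psum p a \<le> R * (psum p b - psum p a)"
    and RQ: "psum q d + psum q c \<le> R' * (psum q d - psum q c)"
    and del: "\<delta> \<ge> 0" "\<delta> * R * R' \<le> e"
  shows "(\<forall>i\<in>{a<..b}. \<forall>j\<in>{c<..d}. u i j \<ge> v) \<Longrightarrow> v \<le> l + e"
    and "(\<forall>i\<in>{a<..b}. \<forall>j\<in>{c<..d}. u i j \<le> v) \<Longrightarrow> l - e \<le> v"
proof -
  define W where "W = (psum p b - psum p a) * (psum q d - psum q c)"
  define B where "B = (\<Sum>i\<in>{a<..b}. \<Sum>j\<in>{c<..d}. p i * q j * u i j)"
  have Pab: "psum p b - psum p a > 0"
  proof -
    have "psum p b = psum p a + (\<Sum>i\<in>{a<..b}. p i)" unfolding psum_def using ab by (simp add: sum_Ioc_diff)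
    moreover have "(\<Sum>i\<in>{a<..b}. p i) > 0" using ab ppos by (intro sum_pos) auto
    ultimately show ?thesis by simp
  qed
  have Qcd: "psum q d - psum q c > 0"
  proof -
    have "psum q d = psum q c + (\<Sum>i\<in>{c<..d}. q i)" unfolding psum_def using cd by (simp add: sum_Ioc_diff)
    moreover have "(\<Sum>i\<in>{c<..d}. q i) > 0" using cd qpos by (intro sum_pos) auto
    ultimately show ?thesis by simp
  qed
  have W: "W > 0" unfolding W_def using Pab Qcd by simp
  have "\<bar>B - l * W\<bar> \<le> \<delta> * ((psum p b + psum p a) * (psum q d + psum q c))"
    unfolding B_def W_def by (rule block_close[OF Ppos Qpos _ _ sig]) (use ab cd in auto)
  also have "\<dots> \<le> \<delta> * ((R * (psum p b - psum p a)) * (R' * (psum q d - psum q c)))"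
  proof -
    have "0 \<le> psum p b + psum p a" "0 \<le> psum q d + psum q c" using Ppos Qpos by (auto intro: add_nonneg_nonneg less_imp_le)
    hence "(psum p b + psum p a) * (psum q d + psum q c) \<le> (R * (psum p b - psum p a)) * (R' * (psum q d - psum q c))"
      using RP RQ by (intro mult_mono) auto
    thus ?thesis using del by (intro mult_left_mono) auto
  qed
  also have "\<dots> = (\<delta> * R * R') * W" unfolding W_def by (simp add: algebra_simps)
  also have "\<dots> \<le> e * W" using del W by (intro mult_right_mono) auto
  finally have close: "\<bar>B - l * W\<bar> \<le> e * W" .
  have Bsum_w: "(\<Sum>i\<in>{a<..b}. \<Sum>j\<in>{c<..d}. p i * q j * v) = v * W"
  proof -
    have "(\<Sum>i\<in>{a<..b}. \<Sum>j\<in>{c<..d}. p i * q j * v) = v * (\<Sum>i\<in>{a<..b}. \<Sum>j\<in>{c<..d}. p i * q j)"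
      by (simp add: sum_distrib_left mult.commute mult.left_commute)
    thus ?thesis unfolding W_def using ab cd block_weight[of a b c d p q] by simp
  qed
  show "v \<le> l + e" if H: "\<forall>i\<in>{a<..b}. \<forall>j\<in>{c<..d}. u i j \<ge> v"
  proof -
    have "(\<Sum>i\<in>{a<..b}. \<Sum>j\<in>{c<..d}. p i * q j * v) \<le> B"
      unfolding B_def using H ppos qpos
      by (intro sum_mono) (auto intro!: mult_left_mono less_imp_le)
    hence "v * W \<le> (l + e) * W" using close Bsum_w by (simp add: algebra_simps abs_le_iff)
    thus ?thesis using W by simp
  qed
  show "l - e \<le> v" if H: "\<forall>i\<in>{a<..b}. \<forall>j\<in>{c<..d}. u i j \<le> v"
  proof -
    have "B \<le> (\<Sum>i\<in>{a<..b}. \<Sum>j\<in>{c<..d}. p i * q j * v)"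
      unfolding B_def using H ppos qpos
      by (intro sum_mono) (auto intro!: mult_left_mono less_imp_le)
    hence "(l - e) * W \<le> v * W" using close Bsum_w by (simp add: algebra_simps abs_le_iff)
    thus ?thesis using W by simp
  qed
qed

lemma min_mono_aux: "(y::real) > 0 \<Longrightarrow> x \<le> min a b * y \<Longrightarrow> x \<le> a * y \<and> x \<le> b * y"
  by (meson min.cobounded1 min.cobounded2 mult_right_mono order_trans less_imp_le)

lemma up_cond:
  assumes Ppos: "\<And>m. psum p m > 0" and Qpos: "\<And>n. psum q n > 0"
    and SP: "slow_dec_P p u" and SQ: "slow_dec_Q q u"
    and SS: "slow_dec_P_strong p q u \<or> slow_dec_Q_strong p q u" and e: "e > 0"
  shows "\<exists>lam>1. \<exists>kap>1. \<exists>N. \<forall>m\<ge>N. \<forall>n\<ge>N. \<forall>i j. psum p m \<le> psum p i \<longrightarrow> psum p i \<le> lam * psum p m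
           \<longrightarrow> psum q n \<le> psum q j \<longrightarrow> psum q j \<le> kap * psum q n \<longrightarrow> u m n - 2 * e \<le> u i j"
proof -
  obtain l1 N1 where l1: "l1 > 1" and N1: "\<forall>m\<ge>N1. \<forall>n\<ge>N1. \<forall>i. psum p m \<le> psum p i \<longrightarrow> psum p i \<le> l1 * psum p m
           \<longrightarrow> u i n - u m n > -e" using SP_extract[OF SP e] by blast
  obtain k1 N2 where k1: "k1 > 1" and N2: "\<forall>m\<ge>N2. \<forall>n\<ge>N2. \<forall>j. psum q n \<le> psum q j \<longrightarrow> psum q j \<le> k1 * psum q n
           \<longrightarrow> u m j - u m n > -e" using SQ_extract[OF SQ e] by blast
  from SS show ?thesis
  proof
    assume "slow_dec_P_strong p q u"
    from SPs_extract[OF this e] obtain l2 k2 N3 where lk: "l2 > 1" "k2 > 1" and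
      N3: "\<forall>m\<ge>N3. \<forall>n\<ge>N3. \<forall>i j. psum p m \<le> psum p i \<longrightarrow> psum p i \<le> l2 * psum p m
           \<longrightarrow> psum q n \<le> psum q j \<longrightarrow> psum q j \<le> k2 * psum q n \<longrightarrow> u i j - u m j > -e" by blast
    have H: "\<forall>m\<ge>max N2 N3. \<forall>n\<ge>max N2 N3. \<forall>i j. psum p m \<le> psum p i \<longrightarrow> psum p i \<le> l2 * psum p m
           \<longrightarrow> psum q n \<le> psum q j \<longrightarrow> psum q j \<le> min k1 k2 * psum q n \<longrightarrow> u m n - 2 * e \<le> u i j"
    proof (intro allI impI)
      fix m n i j assume m: "m \<ge> max N2 N3" and n: "n \<ge> max N2 N3"
        and h: "psum p m \<le> psum p i" "psum p i \<le> l2 * psum p m" "psum q n \<le> psum q j" "psum q j \<le> min k1 k2 * psum q n"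
      have hq: "psum q j \<le> k1 * psum q n" "psum q j \<le> k2 * psum q n" using min_mono_aux[OF Qpos h(4)] by auto
      have "u i j - u m j > -e" using N3 m n h hq by auto
      moreover have "u m j - u m n > -e" using N2 m n h hq by auto
      ultimately show "u m n - 2 * e \<le> u i j" by linarith
    qed
    moreover have "1 < min k1 k2" using lk k1 by simp
    ultimately show ?thesis using lk by blast
  next
    assume "slow_dec_Q_strong p q u"
    from SQs_extract[OF this e] obtain l2 k2 N3 where lk: "l2 > 1" "k2 > 1" and
      N3: "\<forall>m\<ge>N3. \<forall>n\<ge>N3. \<forall>i j. psum p m \<le> psum p i \<longrightarrow> psum p i \<le> l2 * psum p m
           \<longrightarrow> psum q n \<le> psum q j \<longrightarrow> psum q j \<le> k2 * psum q n \<longrightarrow> u i j - u i n > -e" by blast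
    have H: "\<forall>m\<ge>max N1 N3. \<forall>n\<ge>max N1 N3. \<forall>i j. psum p m \<le> psum p i \<longrightarrow> psum p i \<le> min l1 l2 * psum p m
           \<longrightarrow> psum q n \<le> psum q j \<longrightarrow> psum q j \<le> k2 * psum q n \<longrightarrow> u m n - 2 * e \<le> u i j"
    proof (intro allI impI)
      fix m n i j assume m: "m \<ge> max N1 N3" and n: "n \<ge> max N1 N3"
        and h: "psum p m \<le> psum p i" "psum p i \<le> min l1 l2 * psum p m" "psum q n \<le> psum q j" "psum q j \<le> k2 * psum q n"
      have hp: "psum p i \<le> l1 * psum p m" "psum p i \<le> l2 * psum p m" using min_mono_aux[OF Ppos h(2)] by auto
      have "u i j - u i n > -e" using N3 m n h hp by auto
      moreover have "u i n - u m n > -e" using N1 m n h hp by auto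
      ultimately show "u m n - 2 * e \<le> u i j" by linarith
    qed
    moreover have "1 < min l1 l2" using lk l1 by simp
    ultimately show ?thesis using lk by blast
  qed
qed

lemma down_cond:
  assumes SP: "slow_dec_P p u" and SQ: "slow_dec_Q q u" and e: "e > 0"
  shows "\<exists>lam>1. \<exists>kap>1. \<exists>N. \<forall>i\<ge>N. \<forall>j\<ge>N. \<forall>m\<ge>N. \<forall>n\<ge>N. psum p i \<le> psum p m \<longrightarrow> psum p m \<le> lam * psum p i
           \<longrightarrow> psum q j \<le> psum q n \<longrightarrow> psum q n \<le> kap * psum q j \<longrightarrow> u i j \<le> u m n + 2 * e"
proof -
  obtain l1 N1 where l1: "l1 > 1" and N1: "\<forall>m\<ge>N1. \<forall>n\<ge>N1. \<forall>i. psum p m \<le> psum p i \<longrightarrow> psum p i \<le> l1 * psum p m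
           \<longrightarrow> u i n - u m n > -e" using SP_extract[OF SP e] by blast
  obtain k1 N2 where k1: "k1 > 1" and N2: "\<forall>m\<ge>N2. \<forall>n\<ge>N2. \<forall>j. psum q n \<le> psum q j \<longrightarrow> psum q j \<le> k1 * psum q n
           \<longrightarrow> u m j - u m n > -e" using SQ_extract[OF SQ e] by blast
  have H: "\<forall>i\<ge>max N1 N2. \<forall>j\<ge>max N1 N2. \<forall>m\<ge>max N1 N2. \<forall>n\<ge>max N1 N2. psum p i \<le> psum p m \<longrightarrow> psum p m \<le> l1 * psum p i
           \<longrightarrow> psum q j \<le> psum q n \<longrightarrow> psum q n \<le> k1 * psum q j \<longrightarrow> u i j \<le> u m n + 2 * e"
  proof (intro allI impI)
    fix i j m n assume ij: "i \<ge> max N1 N2" "j \<ge> max N1 N2" "m \<ge> max N1 N2" "n \<ge> max N1 N2"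
      and h: "psum p i \<le> psum p m" "psum p m \<le> l1 * psum p i" "psum q j \<le> psum q n" "psum q n \<le> k1 * psum q j"
    have "u m n - u m j > -e" using N2 ij h by auto
    moreover have "u m j - u i j > -e" using N1 ij h by auto
    ultimately show "u i j \<le> u m n + 2 * e" by linarith
  qed
  thus ?thesis using l1 k1 by blast
qed

lemma ratio_R:
  fixes x y s lam :: real
  assumes "x > 0" "s > 1" "s * x \<le> y" "y \<le> lam * x"
  shows "y + x \<le> ((lam + 1) / (s - 1)) * (y - x)"
proof -
  have l: "lam \<ge> 1" using assms
    by (smt (verit, best) mult_less_cancel_right1)
  have "y + x \<le> (lam + 1) * x" using assms by (simp add: algebra_simps)
  also have "\<dots> = ((lam + 1) / (s - 1)) * ((s - 1) * x)" using assms by simp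
  also have "\<dots> \<le> ((lam + 1) / (s - 1)) * (y - x)"
    using assms l by (intro mult_left_mono) (auto simp: algebra_simps)
  finally show ?thesis .
qed

theorem theorem4p1:
  fixes p q :: "nat \<Rightarrow> real" and u :: "nat \<Rightarrow> nat \<Rightarrow> real" and l \<alpha> :: real
  assumes "\<alpha> \<ge> 0"
    and "SVA_reg \<alpha> p" and "SVA_reg \<alpha> q"
    and "filterlim (psum p) at_top sequentially"
    and "filterlim (psum q) at_top sequentially"
    and "Nbar_summable p q u l"
    and "slow_dec_P p u" and "slow_dec_Q q u"
    and "slow_dec_P_strong p q u \<or> slow_dec_Q_strong p q u"
  shows "P_convergent u l"
proof -
  have ppos: "\<And>m. p m > 0" and qpos: "\<And>n. q n > 0"
    using assms(2,3) unfolding SVA_reg_def by auto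
  have Ppos: "\<And>m. psum p m > 0" unfolding psum_def using ppos by (intro sum_pos) auto
  have Qpos: "\<And>n. psum q n > 0" unfolding psum_def using qpos by (intro sum_pos) auto
  interpret RP: regseq "psum p"
  proof
    show "\<And>m. psum p m > 0" by (rule Ppos)
    show "\<And>m. psum p m < psum p (Suc m)" unfolding psum_def using ppos by simp
    show "filterlim (psum p) at_top sequentially" by (rule assms(4))
    show "\<And>\<delta>. \<delta> > 0 \<Longrightarrow> \<exists>M. \<forall>m\<ge>M. psum p (Suc m) \<le> (1 + \<delta>) * psum p m"
      by (rule SVA_ratio_ev[OF assms(2)])
  qed
  interpret RQ: regseq "psum q"
  proof
    show "\<And>m. psum q m > 0" by (rule Qpos)
    show "\<And>m. psum q m < psum q (Suc m)" unfolding psum_def using qpos by simp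
    show "filterlim (psum q) at_top sequentially" by (rule assms(5))
    show "\<And>\<delta>. \<delta> > 0 \<Longrightarrow> \<exists>M. \<forall>m\<ge>M. psum q (Suc m) \<le> (1 + \<delta>) * psum q m"
      by (rule SVA_ratio_ev[OF assms(3)])
  qed
  have sig: "P_convergent (wmean p q u) l" using assms(6) unfolding Nbar_summable_def .
  show ?thesis unfolding P_convergent_def
  proof (intro allI impI)
    fix \<epsilon> :: real assume eps: "\<epsilon> > 0"
    define e where "e = \<epsilon> / 4"
    have e: "e > 0" using eps by (simp add: e_def)
    obtain lu ku Nu where lu: "lu > 1" and ku: "ku > 1" and Nu: "\<forall>m\<ge>Nu. \<forall>n\<ge>Nu. \<forall>i j. psum p m \<le> psum p i \<longrightarrow> psum p i \<le> lu * psum p m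
           \<longrightarrow> psum q n \<le> psum q j \<longrightarrow> psum q j \<le> ku * psum q n \<longrightarrow> u m n - 2 * e \<le> u i j"
      using up_cond[OF Ppos Qpos assms(7,8,9) e] by blast
    obtain ld kd Nd where ld: "ld > 1" and kd: "kd > 1" and Nd: "\<forall>i\<ge>Nd. \<forall>j\<ge>Nd. \<forall>m\<ge>Nd. \<forall>n\<ge>Nd. psum p i \<le> psum p m \<longrightarrow> psum p m \<le> ld * psum p i
           \<longrightarrow> psum q j \<le> psum q n \<longrightarrow> psum q n \<le> kd * psum q j \<longrightarrow> u i j \<le> u m n + 2 * e"
      using down_cond[OF assms(7,8) e] by blast
    define Ru where "Ru = (lu + 1) / (sqrt lu - 1)"
    define Rku where "Rku = (ku + 1) / (sqrt ku - 1)"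
    define Rd where "Rd = (ld + 1) / (sqrt ld - 1)"
    define Rkd where "Rkd = (kd + 1) / (sqrt kd - 1)"
    have Rpos: "Ru > 0" "Rku > 0" "Rd > 0" "Rkd > 0"
      using lu ku ld kd by (auto simp: Ru_def Rku_def Rd_def Rkd_def)
    define \<delta> where "\<delta> = min (e / (Ru * Rku)) (e / (Rd * Rkd))"
    have dpos: "\<delta> > 0" using Rpos e by (simp add: \<delta>_def)
    have du: "\<delta> * Ru * Rku \<le> e"
    proof -
      have "\<delta> \<le> e / (Ru * Rku)" by (simp add: \<delta>_def)
      hence "\<delta> * (Ru * Rku) \<le> e" using Rpos by (simp add: le_divide_eq)
      thus ?thesis by (simp add: mult.assoc)
    qed
    have dd: "\<delta> * Rd * Rkd \<le> e"
    proof -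
      have "\<delta> \<le> e / (Rd * Rkd)" by (simp add: \<delta>_def)
      hence "\<delta> * (Rd * Rkd) \<le> e" using Rpos by (simp add: le_divide_eq)
      thus ?thesis by (simp add: mult.assoc)
    qed
    obtain N0 where N0: "\<And>x y. x \<ge> N0 \<Longrightarrow> y \<ge> N0 \<Longrightarrow> \<bar>wmean p q u x y - l\<bar> < \<delta>"
      using sig dpos unfolding P_convergent_def by blast
    obtain M1 where M1: "\<forall>m\<ge>M1. \<exists>a>m. sqrt lu * psum p m \<le> psum p a \<and> psum p a \<le> lu * psum p m"
      using RP.window_up[OF lu] by blast
    obtain M2 where M2: "\<forall>m\<ge>M2. \<exists>a>m. sqrt ku * psum q m \<le> psum q a \<and> psum q a \<le> ku * psum q m"
      using RQ.window_up[OF ku] by blast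
    obtain M3 where M3: "\<forall>m\<ge>M3. \<exists>a. max Nd N0 \<le> a \<and> a < m \<and> sqrt ld * psum p a \<le> psum p m \<and> psum p m \<le> ld * psum p a"
      using RP.window_down[OF ld] by blast
    obtain M4 where M4: "\<forall>m\<ge>M4. \<exists>a. max Nd N0 \<le> a \<and> a < m \<and> sqrt kd * psum q a \<le> psum q m \<and> psum q m \<le> kd * psum q a"
      using RQ.window_down[OF kd] by blast
    define n0 where "n0 = max (max Nu N0) (max (max M1 M2) (max M3 M4))"
    have "\<bar>u m n - l\<bar> < \<epsilon>" if m: "m \<ge> n0" and n: "n \<ge> n0" for m n
    proof -
      have upper: "u m n - 2 * e \<le> l + e"
      proof -
        obtain a where a: "a > m" "sqrt lu * psum p m \<le> psum p a" "psum p a \<le> lu * psum p m"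
          using M1 m unfolding n0_def by auto
        obtain c where c: "c > n" "sqrt ku * psum q n \<le> psum q c" "psum q c \<le> ku * psum q n"
          using M2 n unfolding n0_def by auto
        show ?thesis
        proof (rule block_main(1)[OF ppos qpos Ppos Qpos a(1) c(1)])
          show "\<bar>wmean p q u x y - l\<bar> \<le> \<delta>" if "x \<in> {m, a}" "y \<in> {n, c}" for x y
            using N0[of x y] that m n a(1) c(1) unfolding n0_def by fastforce
          show "psum p a + psum p m \<le> Ru * (psum p a - psum p m)"
            unfolding Ru_def using a lu by (intro ratio_R Ppos) auto
          show "psum q c + psum q n \<le> Rku * (psum q c - psum q n)"
            unfolding Rku_def using c ku by (intro ratio_R Qpos) auto
          show "0 \<le> \<delta>" using dpos by simp
          show "\<delta> * Ru * Rku \<le> e" by (rule du)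
          show "\<forall>i\<in>{m<..a}. \<forall>j\<in>{n<..c}. u m n - 2 * e \<le> u i j"
          proof (intro ballI)
            fix i j assume i: "i \<in> {m<..a}" and j: "j \<in> {n<..c}"
            have "psum p m \<le> psum p i" "psum p i \<le> psum p a" using i by (auto intro: RP.mono_le)
            moreover have "psum q n \<le> psum q j" "psum q j \<le> psum q c" using j by (auto intro: RQ.mono_le)
            ultimately show "u m n - 2 * e \<le> u i j"
              using Nu m n a c unfolding n0_def by auto
          qed
        qed
      qed
      have lower: "l - e \<le> u m n + 2 * e"
      proof -
        obtain a where a: "max Nd N0 \<le> a" "a < m" "sqrt ld * psum p a \<le> psum p m" "psum p m \<le> ld * psum p a"
          using M3 m unfolding n0_def by auto
        obtain c where c: "max Nd N0 \<le> c" "c < n" "sqrt kd * psum q c \<le> psum q n" "psum q n \<le> kd * psum q c"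
          using M4 n unfolding n0_def by auto
        show ?thesis
        proof (rule block_main(2)[OF ppos qpos Ppos Qpos a(2) c(2)])
          show "\<bar>wmean p q u x y - l\<bar> \<le> \<delta>" if "x \<in> {a, m}" "y \<in> {c, n}" for x y
            using N0[of x y] that a(1,2) c(1,2) by fastforce
          show "psum p m + psum p a \<le> Rd * (psum p m - psum p a)"
            unfolding Rd_def using a ld by (intro ratio_R Ppos) auto
          show "psum q n + psum q c \<le> Rkd * (psum q n - psum q c)"
            unfolding Rkd_def using c kd by (intro ratio_R Qpos) auto
          show "0 \<le> \<delta>" using dpos by simp
          show "\<delta> * Rd * Rkd \<le> e" by (rule dd)
          show "\<forall>i\<in>{a<..m}. \<forall>j\<in>{c<..n}. u i j \<le> u m n + 2 * e"
          proof (intro ballI)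
            fix i j assume i: "i \<in> {a<..m}" and j: "j \<in> {c<..n}"
            have "psum p i \<le> psum p m" "psum p a \<le> psum p i" using i by (auto intro: RP.mono_le)
            moreover have "psum q j \<le> psum q n" "psum q c \<le> psum q j" using j by (auto intro: RQ.mono_le)
            moreover have "ld * psum p a \<le> ld * psum p i" using ld \<open>psum p a \<le> psum p i\<close> by simp
            moreover have "kd * psum q c \<le> kd * psum q j" using kd \<open>psum q c \<le> psum q j\<close> by simp
            moreover have "i \<ge> Nd" "j \<ge> Nd" "m \<ge> Nd" "n \<ge> Nd" using i j a(1,2) c(1,2) by auto
            ultimately show "u i j \<le> u m n + 2 * e"
              using Nd a(4) c(4) by (meson order_trans)
          qed
        qed
      qed
      from upper lower have "\<bar>u m n - l\<bar> \<le> 3 * e" by linarith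
      also have "\<dots> < \<epsilon>" using eps by (simp add: e_def)
      finally show ?thesis .
    qed
    thus "\<exists>n0. \<forall>m n. n0 \<le> m \<and> n0 \<le> n \<longrightarrow> \<bar>u m n - l\<bar> < \<epsilon>" by blast
  qed
qed

end
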